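(* Let $L>0$ and let $\alpha,\beta:\mathbb{R}\to\mathbb{R}^2$ be smooth $L$-periodic maps with $\alpha'$ nowhere zero, $\langle\beta,\alpha'\rangle = 0$ and $|\alpha'|^2+|\beta|^2=1$. Let $\gamma(t,s) = \tfrac12(\alpha(s+t)+\alpha(s-t)) + \tfrac12\int_{s-t}^{s+t}\beta(\xi)\,d\xi$, $a=\alpha'+\beta$, $b=\alpha'-\beta$, and let $\psi,\tilde\psi:\mathbb{R}\to\mathbb{R}$ be smooth functions with $a = (\cos\psi,\sin\psi)$ and $b = -(\cos\tilde\psi,\sin\tilde\psi)$. Assume that the closed curve $\alpha$ has non-zero rotation index and that the unit tangent map is continuous. If $\psi(s_0) = \psi(s_1) = \tilde\psi(r_0)$ for some $s_0,s_1,r_0$ with $0 < s_1 - s_0 < L$, then $\psi$ is constant on $(s_0,s_1)$.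
   Context: The unit tangent map is $U(t,s) = \gamma_{,s}(t,s)/|\gamma_{,s}(t,s)|$, defined where $\gamma_{,s}(t,s)\neq 0$; note $2\gamma_{,s}(t,s) = a(s+t)+b(s-t)$. "The unit tangent map is continuous" means that for every $t\in\mathbb{R}$, $s\mapsto U(t,s)$ extends to a continuous map on all of $\mathbb{R}$. The rotation index of $\alpha$ is the degree of $\alpha'/|\alpha'|$ as a map from $\mathbb{R}/L\mathbb{Z}$ to the unit circle; $a$ and $b$ have the same degree $d$, so $\psi(s+L)-\psi(s) = \tilde\psi(s+L)-\tilde\psi(s) = 2\pi d$. *)

theory Defs
  imports "HOL-Complex_Analysis.Complex_Analysis"
begin

text \<open>The plane R^2 is modelled by the complex numbers; (x,y) corresponds to Complex x y,
  so (cos p, sin p) is cis p and the Euclidean inner product is the inner product on complex.\<close>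

definition vderiv :: "(real \<Rightarrow> 'a::real_normed_vector) \<Rightarrow> real \<Rightarrow> 'a" where
  "vderiv f = (\<lambda>x. vector_derivative f (at x))"

definition smooth_fun :: "(real \<Rightarrow> 'a::real_normed_vector) \<Rightarrow> bool" where
  "smooth_fun f \<longleftrightarrow> (\<forall>n x. (vderiv ^^ n) f differentiable (at x))"

definition oint :: "real \<Rightarrow> real \<Rightarrow> (real \<Rightarrow> complex) \<Rightarrow> complex" where
  "oint u v f = (if u \<le> v then integral {u..v} f else - integral {v..u} f)"

definition gam :: "(real \<Rightarrow> complex) \<Rightarrow> (real \<Rightarrow> complex) \<Rightarrow> real \<Rightarrow> real \<Rightarrow> complex" where
  "gam \<alpha> \<beta> t s = (\<alpha> (s + t) + \<alpha> (s - t)) / 2 + oint (s - t) (s + t) \<beta> / 2"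

definition gam_s :: "(real \<Rightarrow> complex) \<Rightarrow> (real \<Rightarrow> complex) \<Rightarrow> real \<Rightarrow> real \<Rightarrow> complex" where
  "gam_s \<alpha> \<beta> t s = vderiv (\<lambda>s'. gam \<alpha> \<beta> t s') s"

definition unit_tangent :: "(real \<Rightarrow> complex) \<Rightarrow> (real \<Rightarrow> complex) \<Rightarrow> real \<Rightarrow> real \<Rightarrow> complex" where
  "unit_tangent \<alpha> \<beta> t s = gam_s \<alpha> \<beta> t s / of_real (cmod (gam_s \<alpha> \<beta> t s))"

text \<open>The unit tangent map is continuous: for every t, s \<mapsto> U(t,s), defined where
  gamma_s(t,s) is nonzero, extends to a continuous map on all of R.\<close>
definition unit_tangent_continuous :: "(real \<Rightarrow> complex) \<Rightarrow> (real \<Rightarrow> complex) \<Rightarrow> bool" where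
  "unit_tangent_continuous \<alpha> \<beta> \<longleftrightarrow>
     (\<forall>t. \<exists>g. continuous_on UNIV g \<and>
        (\<forall>s. gam_s \<alpha> \<beta> t s \<noteq> 0 \<longrightarrow> g s = unit_tangent \<alpha> \<beta> t s))"

text \<open>Rotation index of the L-periodic closed curve alpha: the degree of alpha'/|alpha'|
  on R/LZ, i.e. the winding number of the closed path alpha' over one period around 0.\<close>
definition rotation_index :: "real \<Rightarrow> (real \<Rightarrow> complex) \<Rightarrow> complex" where
  "rotation_index L \<alpha> = winding_number (\<lambda>u. vderiv \<alpha> (L * u)) 0"

end

theory Submission
  imports Defs
begin

lemma cis_eq_ex:
  assumes "cis x = cis y" shows "\<exists>n::int. y = x + 2*pi*n"
proof -
  have "sin y = sin x \<and> cos y = cos x" using assms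
    by (metis cis.sel(1) cis.sel(2))
  then show ?thesis using sin_cos_eq_iff by blast
qed

lemma cis_shift_int: "cis (w + 2*pi * of_int k) = cis w"
  by (simp add: cis_mult[symmetric])

lemma cis_sub_one: "cis (2*x) - 1 = 2 * \<i> * of_real (sin x) * cis x"
proof -
  have 1: "cis (2*x) = cis x * cis x" by (simp add: cis_mult)
  have 2: "cis x * cis (-x) = 1" by (simp add: cis_mult)
  have 3: "cis x - cis (-x) = 2 * \<i> * of_real (sin x)" by (simp add: complex_eq_iff)
  have "cis (2*x) - 1 = cis x * (cis x - cis (-x))" unfolding 1 using 2 by (simp add: algebra_simps)
  also have "\<dots> = 2 * \<i> * of_real (sin x) * cis x" unfolding 3 by (simp add: algebra_simps)
  finally show ?thesis .
qed

lemma cis_diff: "cis p - cis q = 2 * \<i> * of_real (sin ((p - q)/2)) * cis ((p + q)/2)"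
proof -
  have e: "q + 2*((p-q)/2) = p" by (simp add: field_simps)
  have "cis p = cis q * cis (2*((p-q)/2))" by (simp only: cis_mult e)
  then have "cis p - cis q = cis q * (cis (2*((p-q)/2)) - 1)" by (simp add: algebra_simps)
  also have "\<dots> = 2 * \<i> * of_real (sin ((p - q)/2)) * (cis q * cis ((p-q)/2))"
    by (simp only: cis_sub_one) (simp add: algebra_simps)
  also have "cis q * cis ((p-q)/2) = cis ((p+q)/2)" by (simp add: cis_mult field_simps)
  finally show ?thesis .
qed

lemma sgn_factor:
  assumes "cmod h = 1" and "x \<noteq> 0"
  shows "(of_real x * h) / of_real (cmod (of_real x * h)) = of_real (sgn x) * h"
  using assms by (simp add: norm_mult sgn_if field_simps)

lemma side_limit:
  fixes g h :: "real \<Rightarrow> complex" and \<theta> :: "real \<Rightarrow> real"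
  assumes F: "F \<le> at s" "F \<noteq> bot"
    and gc: "isCont g s" and hc: "isCont h s"
    and th: "isCont \<theta> s" "\<theta> s = 0"
    and gU: "\<And>y. sin (\<theta> y / 2) \<noteq> 0 \<Longrightarrow> g y = of_real (sgn (sin (\<theta> y / 2))) * h y"
  shows "eventually (\<lambda>y. 0 < \<theta> y) F \<Longrightarrow> g s = h s"
    and "eventually (\<lambda>y. \<theta> y < 0) F \<Longrightarrow> g s = - h s"
proof -
  have "(\<theta> \<longlongrightarrow> 0) (at s)" using th by (metis isCont_def)
  then have ev: "eventually (\<lambda>y. \<theta> y < 2*pi \<and> \<theta> y > - 2*pi) (at s)"
    using order_tendstoD[of \<theta> 0 "at s"] by (auto intro: eventually_conj)
  then have evF: "eventually (\<lambda>y. \<theta> y < 2*pi \<and> \<theta> y > - 2*pi) F"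
    using F(1) filter_leD by blast
  have gF: "(g \<longlongrightarrow> g s) F" using gc F(1) by (metis isCont_def tendsto_mono)
  have hF: "(h \<longlongrightarrow> h s) F" using hc F(1) by (metis isCont_def tendsto_mono)
  {
    assume pos: "eventually (\<lambda>y. 0 < \<theta> y) F"
    have "eventually (\<lambda>y. g y = h y) F"
      using eventually_conj[OF pos evF]
    proof (rule eventually_mono)
      fix y assume y: "0 < \<theta> y \<and> \<theta> y < 2*pi \<and> \<theta> y > - 2*pi"
      then have "sin (\<theta> y / 2) > 0" by (intro sin_gt_zero) auto
      then show "g y = h y" using gU[of y] by simp
    qed
    from tendsto_cong[OF this, THEN iffD1, OF gF] have "(h \<longlongrightarrow> g s) F" .
    then show "g s = h s" using tendsto_unique[OF F(2) hF] by simp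
  }
  {
    assume neg: "eventually (\<lambda>y. \<theta> y < 0) F"
    have "eventually (\<lambda>y. g y = - h y) F"
      using eventually_conj[OF neg evF]
    proof (rule eventually_mono)
      fix y assume y: "\<theta> y < 0 \<and> \<theta> y < 2*pi \<and> \<theta> y > - 2*pi"
      then have "sin (- \<theta> y / 2) > 0" by (intro sin_gt_zero) auto
      then have "sin (\<theta> y / 2) < 0" by simp
      then show "g y = - h y" using gU[of y] by simp
    qed
    from tendsto_cong[OF this, THEN iffD1, OF gF] have "((\<lambda>y. - h y) \<longlongrightarrow> g s) F" .
    moreover have "((\<lambda>y. - h y) \<longlongrightarrow> - h s) F" using hF by (rule tendsto_minus)
    ultimately show "g s = - h s" by (rule tendsto_unique[OF F(2)])
  }
qed

lemma key_local:
  fixes P Q :: "real \<Rightarrow> real" and \<Gamma> g :: "real \<Rightarrow> complex"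
  assumes dP: "(P has_real_derivative P') (at (s+t))"
    and dQ: "(Q has_real_derivative Q') (at (s-t))"
    and \<Gamma>: "\<And>y. \<Gamma> y = (cis (P (y+t)) - cis (Q (y-t)))/2"
    and gc: "continuous_on UNIV g"
    and gU: "\<And>y. \<Gamma> y \<noteq> 0 \<Longrightarrow> g y = \<Gamma> y / of_real (cmod (\<Gamma> y))"
    and eq: "cis (P (s+t)) = cis (Q (s-t))"
  shows "P' = Q'"
proof (rule ccontr)
  assume ne: "P' \<noteq> Q'"
  define F where "F = (\<lambda>y. P (y+t) - Q (y-t))"
  have dP': "((\<lambda>y. P (y+t)) has_real_derivative P') (at s)" using dP DERIV_shift by blast
  have dQ': "((\<lambda>y. Q (y + - t)) has_real_derivative Q') (at s)" using dQ DERIV_shift[of Q Q' s "-t"] by simp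
  have dF: "(F has_real_derivative (P' - Q')) (at s)"
    unfolding F_def using DERIV_diff[OF dP' dQ'] by simp
  obtain n::int where n: "P (s+t) = Q (s-t) + 2*pi*n" using cis_eq_ex[OF eq[symmetric]] by blast
  define \<theta> where "\<theta> = (\<lambda>y. F y - F s)"
  define h where "h = (\<lambda>y. \<i> * cis (\<theta> y / 2 + Q (y - t)))"
  have Fs: "F s = 2*pi*n" unfolding F_def n by simp
  have \<Gamma>h: "\<Gamma> y = of_real (sin (\<theta> y / 2)) * h y" for y
  proof -
    have "P (y+t) = (\<theta> y + Q (y-t)) + 2*pi * of_int n" unfolding \<theta>_def Fs unfolding F_def by simp
    then have "cis (P (y+t)) = cis (\<theta> y + Q (y-t))" by (simp only: cis_shift_int)
    then have "\<Gamma> y = (cis (\<theta> y + Q (y-t)) - cis (Q (y-t)))/2" using \<Gamma> by simp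
    also have "\<dots> = of_real (sin (\<theta> y / 2)) * h y"
    proof -
      have a1: "((\<theta> y + Q (y-t)) - Q (y-t))/2 = \<theta> y / 2" by simp
      have a2: "((\<theta> y + Q (y-t)) + Q (y-t))/2 = \<theta> y / 2 + Q (y-t)" by simp
      have "cis (\<theta> y + Q (y-t)) - cis (Q (y-t)) = 2 * \<i> * of_real (sin (\<theta> y/2)) * cis (\<theta> y/2 + Q(y-t))"
        using cis_diff[of "\<theta> y + Q (y-t)" "Q (y-t)"] unfolding a1 a2 .
      then show ?thesis unfolding h_def by simp
    qed
    finally show ?thesis .
  qed
  have nh: "cmod (h y) = 1" for y unfolding h_def norm_mult by simp
  have gU': "g y = of_real (sgn (sin (\<theta> y / 2))) * h y" if "sin (\<theta> y / 2) \<noteq> 0" for y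
  proof -
    have "\<Gamma> y \<noteq> 0" using that nh[of y] \<Gamma>h[of y] by auto
    then show ?thesis using gU[of y] \<Gamma>h[of y] sgn_factor[OF nh that] by simp
  qed
  have cF: "isCont F s" using dF by (rule DERIV_isCont)
  have thc: "isCont \<theta> s" unfolding \<theta>_def using cF by (intro continuous_intros)
  have cQ: "isCont (\<lambda>y. Q (y + - t)) s" using dQ' by (rule DERIV_isCont)
  have cQ': "isCont (\<lambda>y. Q (y - t)) s" using cQ by simp
  have hc: "isCont h s" unfolding h_def cis_conv_exp using thc cQ' by (intro continuous_intros) auto
  have gc': "isCont g s" using gc by (simp add: continuous_on_eq_continuous_at)
  have th0: "\<theta> s = 0" unfolding \<theta>_def by simp
  have FR: "at_right s \<le> at s" by (rule at_le) simp
  have FL: "at_left s \<le> at s" by (rule at_le) simp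
  have NR: "at_right s \<noteq> bot" by (rule trivial_limit_at_right_real)
  have NL: "at_left s \<noteq> bot" by (rule trivial_limit_at_left_real)
  have SR1: "g s = h s" if "eventually (\<lambda>y. 0 < \<theta> y) (at_right s)"
    apply (rule side_limit(1)[OF FR NR gc' hc thc th0])
     apply (erule gU')
    apply (rule that)
    done
  have SR2: "g s = - h s" if "eventually (\<lambda>y. \<theta> y < 0) (at_right s)"
    apply (rule side_limit(2)[OF FR NR gc' hc thc th0])
     apply (erule gU')
    apply (rule that)
    done
  have SL1: "g s = h s" if "eventually (\<lambda>y. 0 < \<theta> y) (at_left s)"
    apply (rule side_limit(1)[OF FL NL gc' hc thc th0])
     apply (erule gU')
    apply (rule that)
    done
  have SL2: "g s = - h s" if "eventually (\<lambda>y. \<theta> y < 0) (at_left s)"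
    apply (rule side_limit(2)[OF FL NL gc' hc thc th0])
     apply (erule gU')
    apply (rule that)
    done
  have "h s \<noteq> 0" using nh[of s] by auto
  then have hs: "h s \<noteq> - h s" by auto
  show False
  proof (cases "P' - Q' > 0")
    case True
    obtain d where d: "d > 0" "\<And>k. k > 0 \<Longrightarrow> k < d \<Longrightarrow> F s < F (s + k)"
      using DERIV_pos_inc_right[OF dF True] by blast
    have "eventually (\<lambda>y. 0 < \<theta> y) (at_right s)"
      unfolding eventually_at_right_field
    proof (intro exI[of _ "s+d"] conjI allI impI)
      show "s < s + d" using d by simp
      fix y assume "s < y" "y < s + d"
      then have "F s < F (s + (y - s))" by (intro d(2)) auto
      then show "0 < \<theta> y" unfolding \<theta>_def by simp
    qed
    from SR1[OF this] have 1: "g s = h s" .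
    obtain d where d: "d > 0" "\<And>k. k > 0 \<Longrightarrow> k < d \<Longrightarrow> F (s - k) < F s"
      using DERIV_pos_inc_left[OF dF True] by blast
    have "eventually (\<lambda>y. \<theta> y < 0) (at_left s)"
      unfolding eventually_at_left_field
    proof (intro exI[of _ "s-d"] conjI allI impI)
      show "s - d < s" using d by simp
      fix y assume "s - d < y" "y < s"
      then have "F (s - (s - y)) < F s" by (intro d(2)) auto
      then show "\<theta> y < 0" unfolding \<theta>_def by simp
    qed
    from SL2[OF this] have 2: "g s = - h s" .
    from 1 2 hs show False by simp
  next
    case False
    then have neg: "P' - Q' < 0" using ne by simp
    obtain d where d: "d > 0" "\<And>k. k > 0 \<Longrightarrow> k < d \<Longrightarrow> F s > F (s + k)"
      using DERIV_neg_dec_right[OF dF neg] by blast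
    have "eventually (\<lambda>y. \<theta> y < 0) (at_right s)"
      unfolding eventually_at_right_field
    proof (intro exI[of _ "s+d"] conjI allI impI)
      show "s < s + d" using d by simp
      fix y assume "s < y" "y < s + d"
      then have "F s > F (s + (y - s))" by (intro d(2)) auto
      then show "\<theta> y < 0" unfolding \<theta>_def by simp
    qed
    from SR2[OF this] have 1: "g s = - h s" .
    obtain d where d: "d > 0" "\<And>k. k > 0 \<Longrightarrow> k < d \<Longrightarrow> F s < F (s - k)"
      using DERIV_neg_dec_left[OF dF neg] by blast
    have "eventually (\<lambda>y. 0 < \<theta> y) (at_left s)"
      unfolding eventually_at_left_field
    proof (intro exI[of _ "s-d"] conjI allI impI)
      show "s - d < s" using d by simp
      fix y assume "s - d < y" "y < s"
      then have "F s < F (s - (s - y))" by (intro d(2)) auto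
      then show "0 < \<theta> y" unfolding \<theta>_def by simp
    qed
    from SL1[OF this] have 2: "g s = h s" .
    from 1 2 hs show False by simp
  qed
qed



lemma cis_avoid_aux:
  fixes f :: "real \<Rightarrow> real"
  assumes cont: "continuous_on UNIV f" and av: "\<And>x. cis (f x) \<noteq> cis w"
    and eq: "cis (f x) = cis (f y)" and lt: "f x < f y"
  shows False
proof -
  obtain n::int where n: "f y = f x + 2*pi*n" using cis_eq_ex[OF eq] by blast
  have "n > 0"
  proof (rule ccontr)
    assume "\<not> n > 0" then have "real_of_int n \<le> 0" by simp
    then have "2*pi*n \<le> 0" by (simp add: mult_nonneg_nonpos)
    then show False using n lt by linarith
  qed
  then have n1: "2*pi \<le> 2*pi*n" by simp
  define k where "k = \<lceil>(f x - w)/(2*pi)\<rceil>"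
  define w' where "w' = w + 2*pi*k"
  have k1: "(f x - w)/(2*pi) \<le> k" unfolding k_def by simp
  have k2: "k < (f x - w)/(2*pi) + 1" unfolding k_def by linarith
  have "f x - w \<le> 2*pi*k" using k1 by (simp add: divide_le_eq mult.commute)
  then have w1: "f x \<le> w'" unfolding w'_def by simp
  have "2*pi*k < f x - w + 2*pi" using k2 by (simp add: less_divide_eq field_simps)
  then have w2: "w' \<le> f y" unfolding w'_def using n n1 by linarith
  have "connected (f ` UNIV)" by (rule connected_continuous_image[OF cont]) simp
  then have "w' \<in> f ` UNIV"
    by (rule connectedD_interval) (use w1 w2 in auto)
  then obtain z where "f z = w'" by auto
  then have "cis (f z) = cis w" unfolding w'_def by (simp add: cis_shift_int)
  with av show False by blast
qed

lemma cis_avoid: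
  fixes f :: "real \<Rightarrow> real"
  assumes cont: "continuous_on UNIV f" and av: "\<And>x. cis (f x) \<noteq> cis w"
    and eq: "cis (f x) = cis (f y)"
  shows "f x = f y"
  using cis_avoid_aux[OF cont av eq] cis_avoid_aux[OF cont av eq[symmetric]]
  by (cases "f x < f y") (auto simp: not_less_iff_gr_or_eq)

lemma no_bump_le:
  fixes g g' :: "real \<Rightarrow> real"
  assumes der: "\<And>x. (g has_real_derivative g' x) (at x)"
    and K: "\<And>x y. g x = g y \<Longrightarrow> g' x = g' y"
    and ab: "a \<le> b" and gab: "g a = g b"
  shows "\<forall>x\<in>{a..b}. g x \<le> g a"
proof (rule ccontr)
  assume "\<not> ?thesis"
  then obtain x0 where x0: "x0 \<in> {a..b}" "g x0 > g a" by auto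
  have cont: "continuous_on UNIV g"
    using der by (meson DERIV_isCont continuous_at_imp_continuous_on)
  then have contab: "continuous_on S g" for S using continuous_on_subset by blast
  obtain m where m: "m \<in> {a..b}" "\<And>y. y \<in> {a..b} \<Longrightarrow> g y \<le> g m"
    using continuous_attains_sup[of "{a..b}" g] contab ab by auto
  have gm: "g m > g a" using m(2)[OF x0(1)] x0(2) by linarith
  have am: "a < m" using m(1) gm by (cases "a = m") auto
  have mb: "m < b" using m(1) gm gab by (cases "m = b") auto
  define S where "S = {a..m} \<inter> {y. g y \<le> g a}"
  have clS: "closed S" unfolding S_def
    by (intro closed_Int closed_atLeastAtMost closed_Collect_le cont continuous_on_const)
  have aS: "a \<in> S" using am unfolding S_def by auto
  have bdS: "bdd_above S" unfolding S_def by (rule bdd_aboveI[of _ m]) auto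
  define a0 where "a0 = Sup S"
  have a0S: "a0 \<in> S" unfolding a0_def using closed_contains_Sup[OF _ bdS clS] aS by blast
  have a0m: "a0 < m" using a0S gm unfolding S_def by (cases "a0 = m") auto
  have aa0: "a \<le> a0" using a0S unfolding S_def by auto
  have above: "g y > g a" if "a0 < y" "y \<le> m" for y
  proof (rule ccontr)
    assume "\<not> g y > g a"
    then have "y \<in> S" unfolding S_def using that aa0 by auto
    then have "y \<le> a0" unfolding a0_def using bdS by (rule cSup_upper)
    with that show False by linarith
  qed
  obtain xi where xi: "a0 < xi" "xi < m" "g m - g a0 = (m - a0) * g' xi"
    using MVT2[OF a0m, of g g'] der by blast
  have "g a0 \<le> g a" using a0S unfolding S_def by auto
  then have "(m - a0) * g' xi > 0" using xi(3) gm by linarith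
  then have gxi': "g' xi > 0" using a0m by (simp add: zero_less_mult_iff)
  have gxi: "g xi > g a" using above xi by auto
  have gxim: "g xi \<le> g m" using m(2) xi aa0 mb by auto
  define T where "T = {m..b} \<inter> {y. g y = g xi}"
  have clT: "closed T" unfolding T_def
    by (intro closed_Int closed_atLeastAtMost closed_Collect_eq cont continuous_on_const)
  have bdT: "bdd_above T" unfolding T_def by (rule bdd_aboveI[of _ b]) auto
  obtain z0 where "m \<le> z0" "z0 \<le> b" "g z0 = g xi"
    using IVT2'[of g b "g xi" m] gxi gxim gab mb contab by auto
  then have "z0 \<in> T" unfolding T_def by auto
  then have TS: "T \<noteq> {}" by auto
  define b1 where "b1 = Sup T"
  have b1T: "b1 \<in> T" unfolding b1_def using closed_contains_Sup[OF TS bdT clT] .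
  have b1b: "b1 < b" using b1T gxi gab unfolding T_def by (cases "b1 = b") auto
  have g'b1: "g' b1 > 0" using K[of b1 xi] b1T gxi' unfolding T_def by auto
  obtain d where d: "d > 0" "\<And>h. h > 0 \<Longrightarrow> h < d \<Longrightarrow> g b1 < g (b1 + h)"
    using DERIV_pos_inc_right[OF der g'b1] by blast
  define h where "h = min (d/2) ((b - b1)/2)"
  have hh1: "h \<le> (b-b1)/2" unfolding h_def by (rule min.cobounded2)
  have hh2: "h \<le> d/2" unfolding h_def by (rule min.cobounded1)
  have hh3: "h > 0" unfolding h_def using d b1b by simp
  have h3: "b1 + h \<le> b"
  proof -
    have "2 * h \<le> b - b1" using hh1 by simp
    then show ?thesis using b1b by linarith
  qed
  have h2: "h < d"
  proof -
    have "2 * h \<le> d" using hh2 by simp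
    then show ?thesis using d(1) by linarith
  qed
  note h = hh3 h2 h3
  have "g (b1 + h) > g xi" using d(2)[OF h(1) h(2)] b1T unfolding T_def by auto
  then obtain z where z: "b1 + h \<le> z" "z \<le> b" "g z = g xi"
    using IVT2'[of g b "g xi" "b1 + h"] gxi gab h contab by fastforce
  have "z \<in> T" unfolding T_def using z b1T h unfolding T_def by auto
  then have "z \<le> b1" unfolding b1_def using bdT by (rule cSup_upper)
  with z h show False by linarith
qed

lemma no_bump:
  fixes g g' :: "real \<Rightarrow> real"
  assumes der: "\<And>x. (g has_real_derivative g' x) (at x)"
    and K: "\<And>x y. g x = g y \<Longrightarrow> g' x = g' y"
    and ab: "a \<le> b" and gab: "g a = g b"
  shows "\<forall>x\<in>{a..b}. g x = g a"
proof -
  have 1: "\<forall>x\<in>{a..b}. g x \<le> g a" by (rule no_bump_le[OF der K ab gab])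
  have 2: "\<forall>x\<in>{a..b}. - g x \<le> - g a"
    by (rule no_bump_le[of "\<lambda>x. - g x" "\<lambda>x. - g' x"])
       (auto intro: DERIV_minus der dest: K simp: gab ab)
  from 1 2 show ?thesis by force
qed

lemma shift_vderiv:
  fixes f :: "real \<Rightarrow> 'a::real_normed_vector"
  assumes "(f has_vector_derivative D) (at (x + c))"
  shows "((\<lambda>y. f (y + c)) has_vector_derivative D) (at x)"
proof -
  have "((\<lambda>y. y + c) has_real_derivative 1) (at x)" by (auto intro!: derivative_eq_intros)
  then have "((\<lambda>y. y + c) has_vector_derivative 1) (at x)"
    by (simp add: has_real_derivative_iff_has_vector_derivative)
  from vector_diff_chain_at[OF this] assms show ?thesis by (simp add: o_def)
qed

lemma vderiv_periodic:
  fixes f :: "real \<Rightarrow> 'a::real_normed_vector"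
  assumes per: "\<And>s. f (s + L) = f s" and d: "f differentiable (at (s + L))"
  shows "vderiv f (s + L) = vderiv f s"
proof -
  have "(f has_vector_derivative vector_derivative f (at (s + L))) (at (s + L))"
    using d vector_derivative_works by blast
  from shift_vderiv[OF this] have "(f has_vector_derivative vector_derivative f (at (s + L))) (at s)"
    using per by simp
  then show ?thesis unfolding vderiv_def by (simp add: vector_derivative_at)
qed

lemma oint_eq:
  fixes \<beta> :: "real \<Rightarrow> complex"
  assumes cb: "continuous_on UNIV \<beta>" and "a \<le> u" "a \<le> v"
  shows "oint u v \<beta> = integral {a..v} \<beta> - integral {a..u} \<beta>"
proof -
  have int: "\<beta> integrable_on {x..y}" for x y
    by (rule integrable_continuous_real) (rule continuous_on_subset[OF cb], simp)
  show ?thesis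
  proof (cases "u \<le> v")
    case True
    then show ?thesis unfolding oint_def
      using Henstock_Kurzweil_Integration.integral_combine[OF \<open>a \<le> u\<close> True int] by (simp add: algebra_simps)
  next
    case False
    then show ?thesis unfolding oint_def
      using Henstock_Kurzweil_Integration.integral_combine[OF \<open>a \<le> v\<close> _ int, of u] by (simp add: algebra_simps)
  qed
qed

lemma gam_s_formula:
  fixes \<alpha> \<beta> :: "real \<Rightarrow> complex"
  assumes da: "\<And>x. \<alpha> differentiable (at x)" and cb: "continuous_on UNIV \<beta>"
  shows "gam_s \<alpha> \<beta> t s = (vderiv \<alpha> (s+t) + vderiv \<alpha> (s-t) + \<beta> (s+t) - \<beta> (s-t)) / 2"
proof -
  define a where "a = s - \<bar>t\<bar> - 1"
  define I where "I = (\<lambda>x. integral {a..x} \<beta>)"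
  have dI: "(I has_vector_derivative \<beta> x) (at x)" if "a < x" for x
  proof -
    have "(I has_vector_derivative \<beta> x) (at x within {a..x+1})"
      unfolding I_def
      by (rule integral_has_vector_derivative) (use that continuous_on_subset[OF cb] in auto)
    moreover have "at x within {a..x+1} = at x" using that by (intro at_within_Icc_at) auto
    ultimately show ?thesis by simp
  qed
  define G where "G = (\<lambda>s'. (\<alpha> (s' + t) + \<alpha> (s' + - t)) / 2 + (I (s' + t) - I (s' + - t)) / 2)"
  have dA: "(\<alpha> has_vector_derivative vderiv \<alpha> x) (at x)" for x
    unfolding vderiv_def using da vector_derivative_works by blast
  have dG: "(G has_vector_derivative
      (vderiv \<alpha> (s+t) + vderiv \<alpha> (s + - t)) / 2 + (\<beta> (s+t) - \<beta> (s + - t)) / 2) (at s)"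
    unfolding G_def
    by (intro has_vector_derivative_add has_vector_derivative_diff has_vector_derivative_divide
          shift_vderiv dA dI) (auto simp: a_def)
  have eq: "gam \<alpha> \<beta> t y = G y" if "y \<in> {s - 1<..<s + 1}" for y
  proof -
    have "oint (y - t) (y + t) \<beta> = I (y + t) - I (y - t)"
      unfolding I_def by (rule oint_eq[OF cb]) (use that in \<open>auto simp: a_def\<close>)
    then show ?thesis unfolding gam_def G_def by simp
  qed
  have "((\<lambda>y. gam \<alpha> \<beta> t y) has_vector_derivative
      (vderiv \<alpha> (s+t) + vderiv \<alpha> (s + - t)) / 2 + (\<beta> (s+t) - \<beta> (s + - t)) / 2) (at s)"
    by (rule has_vector_derivative_transform_within_open[OF dG, of "{s - 1<..<s + 1}"])
       (use eq in auto)
  then show ?thesis unfolding gam_s_def vderiv_def[of "\<lambda>y. gam \<alpha> \<beta> t y"]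
    by (simp add: vector_derivative_at field_simps)
qed



lemma sgn_const:
  fixes S :: "real \<Rightarrow> real"
  assumes cS: "continuous_on UNIV S" and nz0: "\<And>s. S s \<noteq> 0"
  shows "S s * S 0 > 0"
proof -
  have conn: "connected (range S)" by (rule connected_continuous_image[OF cS]) simp
  have mid: False if "S x < 0" "0 < S y" for x y
  proof -
    have "0 \<in> range S"
      apply (rule connectedD_interval[OF conn, of "S x" "S y"])
      using that by auto
    then show False using nz0 by (metis imageE)
  qed
  consider "S s > 0" | "S s < 0" using nz0[of s] by linarith
  then show ?thesis
  proof cases
    case 1
    consider "S 0 > 0" | "S 0 < 0" using nz0[of 0] by linarith
    then show ?thesis
    proof cases
      case 1
      with \<open>S s > 0\<close> show ?thesis by (rule mult_pos_pos)
    next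
      case 2
      with \<open>S s > 0\<close> mid show ?thesis by blast
    qed
  next
    case 2
    consider "S 0 > 0" | "S 0 < 0" using nz0[of 0] by linarith
    then show ?thesis
    proof cases
      case 1
      with \<open>S s < 0\<close> mid show ?thesis by blast
    next
      case 2
      with \<open>S s < 0\<close> show ?thesis by (rule mult_neg_neg)
    qed
  qed
qed

lemma winding_zero:
  fixes P Q :: "real \<Rightarrow> real" and A :: "real \<Rightarrow> complex" and L :: real
  assumes cP: "continuous_on UNIV P" and cQ: "continuous_on UNIV Q"
    and sne: "\<And>s. sin ((P s - Q s)/2) \<noteq> 0"
    and A: "\<And>s. A s = (cis (P s) - cis (Q s))/2"
    and PL: "P L = P 0" and QL: "Q L = Q 0"
  shows "winding_number (\<lambda>u. A (L*u)) 0 = 0"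
proof -
  define S where "S = (\<lambda>s. sin ((P s - Q s)/2))"
  have cS: "continuous_on UNIV S" unfolding S_def using cP cQ by (intro continuous_intros) auto
  have sne': "S s \<noteq> 0" for s unfolding S_def by (rule sne)
  have sgnS: "S s * S 0 > 0" for s by (rule sgn_const[OF cS sne'])
  define phi where "phi = (if S 0 > 0 then pi/2 else - (pi/2))"
  define q0 where "q0 = (\<lambda>s. of_real (ln \<bar>S s\<bar>) + \<i> * of_real ((P s + Q s)/2 + phi))"
  have expq: "exp (q0 s) = A s" for s
  proof -
    define a where "a = (P s + Q s)/2"
    have e1: "exp (q0 s) = exp (of_real (ln \<bar>S s\<bar>)) * exp (\<i> * of_real (a + phi))"
      unfolding q0_def a_def by (rule exp_add)
    have e2: "exp (of_real (ln \<bar>S s\<bar>)) = (of_real \<bar>S s\<bar> :: complex)"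
      using sne'[of s] by (simp add: exp_of_real)
    have e3: "exp (\<i> * of_real (a + phi)) = cis a * cis phi"
    proof -
      have "cis (a + phi) = exp (\<i> * of_real (a + phi))" by (rule cis_conv_exp)
      then show ?thesis by (simp only: cis_mult[symmetric])
    qed
    have e4: "of_real \<bar>S s\<bar> * cis phi = \<i> * of_real (S s)"
    proof (cases "S 0 > 0")
      case True
      then have "S s > 0" using sgnS[of s] by (simp add: zero_less_mult_iff)
      then show ?thesis using True unfolding phi_def by simp
    next
      case False
      then have "S s < 0" using sgnS[of s] by (simp add: zero_less_mult_iff)
      then show ?thesis using False unfolding phi_def by simp
    qed
    have "exp (q0 s) = (of_real \<bar>S s\<bar> * cis phi) * cis a"
      unfolding e1 e2 e3 by (simp add: algebra_simps)
    also have "\<dots> = \<i> * of_real (S s) * cis a" unfolding e4 ..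
    also have "\<dots> = A s"
      unfolding A cis_diff S_def a_def by simp
    finally show ?thesis .
  qed
  have cq0: "continuous_on UNIV q0"
    unfolding q0_def using cS cP cQ sne'
    by (intro continuous_intros) auto
  define p where "p = (\<lambda>u. q0 (L * u))"
  have pp: "path p" unfolding path_def p_def
    by (rule continuous_on_compose2[OF cq0]) (auto intro!: continuous_intros)
  have ex: "(\<lambda>u. A (L*u)) = exp \<circ> p" unfolding p_def o_def expq ..
  have "winding_number (\<lambda>u. A (L*u)) 0 = (pathfinish p - pathstart p) / (2 * of_real pi * \<i>)"
    unfolding ex by (rule winding_number_compose_exp[OF pp])
  also have "pathfinish p = pathstart p"
    unfolding pathfinish_def pathstart_def p_def q0_def S_def using PL QL by simp
  finally show ?thesis by simp
qed

theorem lemma2p7: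
  fixes L :: real and \<alpha> \<beta> :: "real \<Rightarrow> complex" and \<psi> \<psi>t :: "real \<Rightarrow> real"
    and s0 s1 r0 :: real
  assumes "L > 0"
    and "smooth_fun \<alpha>" and "smooth_fun \<beta>"
    and "\<And>s. \<alpha> (s + L) = \<alpha> s" and "\<And>s. \<beta> (s + L) = \<beta> s"
    and "\<And>s. vderiv \<alpha> s \<noteq> 0"
    and "\<And>s. inner (\<beta> s) (vderiv \<alpha> s) = 0"
    and "\<And>s. (cmod (vderiv \<alpha> s))\<^sup>2 + (cmod (\<beta> s))\<^sup>2 = 1"
    and "smooth_fun \<psi>" and "smooth_fun \<psi>t"
    and "\<And>s. vderiv \<alpha> s + \<beta> s = cis (\<psi> s)"
    and "\<And>s. vderiv \<alpha> s - \<beta> s = - cis (\<psi>t s)"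
    and "rotation_index L \<alpha> \<noteq> 0"
    and "unit_tangent_continuous \<alpha> \<beta>"
    and "\<psi> s0 = \<psi> s1" and "\<psi> s1 = \<psi>t r0"
    and "0 < s1 - s0" and "s1 - s0 < L"
  shows "\<forall>x\<in>{s0<..<s1}. \<forall>y\<in>{s0<..<s1}. \<psi> x = \<psi> y"
proof -
  have sm0: "f differentiable (at x)" if "smooth_fun f" for f :: "real \<Rightarrow> 'a::real_normed_vector" and x
    using that unfolding smooth_fun_def by (metis funpow_0)
  have da: "\<And>x. \<alpha> differentiable (at x)" using sm0[OF assms(2)] by blast
  have db: "\<And>x. \<beta> differentiable (at x)" using sm0[OF assms(3)] by blast
  have dpsi: "\<And>x. \<psi> differentiable (at x)" using sm0[OF assms(9)] by blast
  have dpsit: "\<And>x. \<psi>t differentiable (at x)" using sm0[OF assms(10)] by blast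
  have cont: "continuous_on UNIV f" if "\<And>x. f differentiable (at x)" for f :: "real \<Rightarrow> 'a::real_normed_vector"
    using that by (meson continuous_at_imp_continuous_on differentiable_imp_continuous_within)
  have cb: "continuous_on UNIV \<beta>" using cont[OF db] .
  have cpsi: "continuous_on UNIV \<psi>" using cont[OF dpsi] .
  have cpsit: "continuous_on UNIV \<psi>t" using cont[OF dpsit] .
  have dva: "\<And>x. vderiv \<alpha> differentiable (at x)"
    using assms(2) unfolding smooth_fun_def by (metis funpow_0 funpow_Suc_right o_apply One_nat_def)
  have cva: "continuous_on UNIV (vderiv \<alpha>)" using cont[OF dva] .
  have Dr: "(f has_real_derivative vderiv f x) (at x)" if "\<And>x. f differentiable (at x)" for f x
    using that vector_derivative_works unfolding vderiv_def
    by (metis has_real_derivative_iff_has_vector_derivative)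
  have A': "vderiv \<alpha> s = (cis (\<psi> s) - cis (\<psi>t s)) / 2" for s
  proof -
    have "vderiv \<alpha> s = ((vderiv \<alpha> s + \<beta> s) + (vderiv \<alpha> s - \<beta> s))/2" by (simp add: field_simps)
    also have "\<dots> = (cis (\<psi> s) - cis (\<psi>t s))/2" by (simp only: assms(11) assms(12)) simp
    finally show ?thesis .
  qed
  have gs: "gam_s \<alpha> \<beta> t y = (cis (\<psi> (y+t)) - cis (\<psi>t (y-t))) / 2" for t y
  proof -
    have "gam_s \<alpha> \<beta> t y = ((vderiv \<alpha> (y+t) + \<beta> (y+t)) + (vderiv \<alpha> (y-t) - \<beta> (y-t))) / 2"
      unfolding gam_s_formula[OF da cb] by (simp add: algebra_simps)
    then show ?thesis using assms(11)[of "y+t"] assms(12)[of "y-t"] by simp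
  qed
  have KL: "vderiv \<psi> u = vderiv \<psi>t v" if "cis (\<psi> u) = cis (\<psi>t v)" for u v
  proof -
    define t where "t = (u - v)/2"
    define s where "s = (u + v)/2"
    have st: "s + t = u" "s - t = v" unfolding s_def t_def by (simp_all add: field_simps)
    obtain g where g: "continuous_on UNIV g"
      "\<And>y. gam_s \<alpha> \<beta> t y \<noteq> 0 \<Longrightarrow> g y = unit_tangent \<alpha> \<beta> t y"
      using assms(14) unfolding unit_tangent_continuous_def by blast
    show ?thesis
    proof (rule key_local[of \<psi> "vderiv \<psi> u" s t \<psi>t "vderiv \<psi>t v" "\<lambda>y. gam_s \<alpha> \<beta> t y" g])
      show "(\<psi> has_real_derivative vderiv \<psi> u) (at (s + t))" unfolding st by (rule Dr[OF dpsi])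
      show "(\<psi>t has_real_derivative vderiv \<psi>t v) (at (s - t))" unfolding st by (rule Dr[OF dpsit])
      show "\<And>y. gam_s \<alpha> \<beta> t y = (cis (\<psi> (y + t)) - cis (\<psi>t (y - t))) / 2" by (rule gs)
      show "continuous_on UNIV g" by (rule g(1))
      show "\<And>y. gam_s \<alpha> \<beta> t y \<noteq> 0 \<Longrightarrow> g y = gam_s \<alpha> \<beta> t y / of_real (cmod (gam_s \<alpha> \<beta> t y))"
        using g(2) unfolding unit_tangent_def by blast
      show "cis (\<psi> (s + t)) = cis (\<psi>t (s - t))" unfolding st by (rule that)
    qed
  qed
  \<comment> \<open>surjectivity of cis of psi-tilde, from the nonzero rotation index\<close>
  have surj: "\<exists>v. cis (\<psi>t v) = cis w" for w
  proof (rule ccontr)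
    assume "\<not> ?thesis"
    then have av: "\<And>v. cis (\<psi>t v) \<noteq> cis w" by blast
    define D where "D = (\<lambda>s. \<psi> s - \<psi>t s)"
    have cD: "continuous_on UNIV D" unfolding D_def using cpsi cpsit by (intro continuous_intros)
    have perA: "vderiv \<alpha> (0 + L) = vderiv \<alpha> 0" by (rule vderiv_periodic[OF assms(4) da])
    have perB: "\<beta> (0 + L) = \<beta> 0" by (rule assms(5))
    have cP: "cis (\<psi> L) = cis (\<psi> 0)"
      using assms(11)[of L] assms(11)[of 0] perA perB by simp
    have cQ: "cis (\<psi>t L) = cis (\<psi>t 0)"
      using assms(12)[of L] assms(12)[of 0] perA perB by simp
    have QL: "\<psi>t L = \<psi>t 0" by (rule cis_avoid[OF cpsit av cQ])
    have cisD: "cis (D s) = cis (\<psi> s) / cis (\<psi>t s)" for s unfolding D_def by (simp add: cis_divide)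
    have Dne: "cis (D s) \<noteq> cis 0" for s
    proof
      assume "cis (D s) = cis 0"
      then have "cis (\<psi> s) = cis (\<psi>t s)" unfolding cisD by (simp add: divide_eq_eq)
      then have "vderiv \<alpha> s = 0" unfolding A' by simp
      with assms(6) show False by blast
    qed
    have DL: "D L = D 0" by (rule cis_avoid[OF cD Dne]) (simp add: cisD cP cQ)
    have PL: "\<psi> L = \<psi> 0" using DL QL unfolding D_def by simp
    have sne: "sin (D s / 2) \<noteq> 0" for s
    proof
      assume "sin (D s / 2) = 0"
      then obtain i :: int where "D s / 2 = of_int i * pi" using sin_zero_iff_int2 by blast
      then have "D s = 2 * pi * of_int i" by (simp add: field_simps)
      then have "cis (D s) = cis 0" by simp
      with Dne show False by blast
    qed
    have "rotation_index L \<alpha> = 0" unfolding rotation_index_def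
      by (rule winding_zero[OF cpsi cpsit _ A' PL QL]) (use sne in \<open>simp add: D_def\<close>)
    with assms(13) show False by blast
  qed
  have K: "vderiv \<psi> x = vderiv \<psi> y" if "\<psi> x = \<psi> y" for x y
  proof -
    obtain v where v: "cis (\<psi>t v) = cis (\<psi> x)" using surj by blast
    have "vderiv \<psi> x = vderiv \<psi>t v" by (rule KL) (use v in simp)
    moreover have "vderiv \<psi> y = vderiv \<psi>t v" by (rule KL) (use v that in simp)
    ultimately show ?thesis by simp
  qed
  have s01: "s0 \<le> s1" using assms(17) by simp
  have all: "\<forall>x\<in>{s0..s1}. \<psi> x = \<psi> s0"
    by (rule no_bump[of \<psi> "vderiv \<psi>" s0 s1, OF Dr[OF dpsi] K s01 assms(15)])
  have all2: "\<psi> x = \<psi> s0" if "x \<in> {s0<..<s1}" for x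
  proof -
    have "x \<in> {s0..s1}" using that by simp
    then show ?thesis using all by blast
  qed
  show ?thesis
  proof (intro ballI)
    fix x y assume "x \<in> {s0<..<s1}" "y \<in> {s0<..<s1}"
    then have "\<psi> x = \<psi> s0" "\<psi> y = \<psi> s0" by (blast intro: all2)+
    then show "\<psi> x = \<psi> y" by (rule trans[OF _ sym])
  qed
qed

end
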